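(* Let $\mathbb{X}$ be a finite subset of the projective space $\mathbb{P}^{s-1}$ over a field $K$, and let $I(\mathbb{X})\subset S=K[t_1,\ldots,t_s]$ be its vanishing ideal. If $0\neq f\in S$ is homogeneous, then $$|V_{\mathbb{X}}(f)|=\begin{cases}\deg(S/(I(\mathbb{X}),f)) & \text{if } (I(\mathbb{X})\colon f)\neq I(\mathbb{X}),\\ 0 & \text{if } (I(\mathbb{X})\colon f)=I(\mathbb{X}).\end{cases}$$
   Context: $I(\mathbb{X})$ is the ideal generated by all homogeneous polynomials vanishing at every point of $\mathbb{X}$. $V_{\mathbb{X}}(f)$ is the set of points $[\alpha]\in\mathbb{X}$ with $f(\alpha)=0$. $(I\colon f)=\{h\in S: hf\in I\}$. For a graded ideal $J$ with Hilbert function $H_J(d)=\dim_K(S_d/J_d)$ and $k=\dim(S/J)$, $\deg(S/J)=(k-1)!\lim_{d\to\infty}H_J(d)/d^{k-1}$ if $k\geq 1$ and $\dim_K(S/J)$ if $k=0$. *)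

theory Defs
  imports Complex_Main "HOL-Library.Poly_Mapping"
begin

text \<open>Polynomials in the variables t_1,...,t_s are represented as poly_mappings from
  monomials (finitely supported exponent vectors; variable t_(i+1) has index i) to coefficients.\<close>

type_synonym 'a mpoly = "(nat \<Rightarrow>\<^sub>0 nat) \<Rightarrow>\<^sub>0 'a"

definition polyS :: "nat \<Rightarrow> 'a::field mpoly set" where
  "polyS s = {p. \<forall>m \<in> Poly_Mapping.keys p. \<forall>i \<in> Poly_Mapping.keys m. i < s}"

definition mdeg :: "(nat \<Rightarrow>\<^sub>0 nat) \<Rightarrow> nat" where
  "mdeg m = (\<Sum>i \<in> Poly_Mapping.keys m. Poly_Mapping.lookup m i)"

definition homog_of_deg :: "nat \<Rightarrow> 'a::field mpoly \<Rightarrow> bool" where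
  "homog_of_deg d p \<longleftrightarrow> (\<forall>m \<in> Poly_Mapping.keys p. mdeg m = d)"

definition homogeneous :: "'a::field mpoly \<Rightarrow> bool" where
  "homogeneous p \<longleftrightarrow> (\<exists>d. homog_of_deg d p)"

definition eval :: "'a::field mpoly \<Rightarrow> (nat \<Rightarrow> 'a) \<Rightarrow> 'a" where
  "eval p \<alpha> = (\<Sum>m \<in> Poly_Mapping.keys p. Poly_Mapping.lookup p m * (\<Prod>i \<in> Poly_Mapping.keys m. \<alpha> i ^ Poly_Mapping.lookup m i))"

definition const :: "'a::field \<Rightarrow> 'a mpoly" where
  "const c = Poly_Mapping.single 0 c"

definition is_ideal :: "nat \<Rightarrow> 'a::field mpoly set \<Rightarrow> bool" where
  "is_ideal s J \<longleftrightarrow> J \<subseteq> polyS s \<and> 0 \<in> J \<and> (\<forall>a\<in>J. \<forall>b\<in>J. a + b \<in> J)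
     \<and> (\<forall>a\<in>J. \<forall>h\<in>polyS s. h * a \<in> J)"

definition ideal_gen :: "nat \<Rightarrow> 'a::field mpoly set \<Rightarrow> 'a mpoly set" where
  "ideal_gen s G = \<Inter> {J. is_ideal s J \<and> G \<subseteq> J}"

definition vanishing_ideal :: "nat \<Rightarrow> (nat \<Rightarrow> 'a::field) set \<Rightarrow> 'a mpoly set" where
  "vanishing_ideal s X = ideal_gen s {g \<in> polyS s. homogeneous g \<and> (\<forall>\<alpha>\<in>X. eval g \<alpha> = 0)}"

definition zero_set :: "(nat \<Rightarrow> 'a::field) set \<Rightarrow> 'a mpoly \<Rightarrow> (nat \<Rightarrow> 'a) set" where
  "zero_set X f = {\<alpha> \<in> X. eval f \<alpha> = 0}"

definition colon :: "nat \<Rightarrow> 'a::field mpoly set \<Rightarrow> 'a mpoly \<Rightarrow> 'a mpoly set" where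
  "colon s I f = {h \<in> polyS s. h * f \<in> I}"

text \<open>K-linear span and dimension of a quotient V/W (minimal number of elements of V
  which together with W span V).\<close>
definition lin_span :: "'a::field mpoly set \<Rightarrow> 'a mpoly set" where
  "lin_span A = {(\<Sum>a\<in>B. const (c a) * a) | B c. finite B \<and> B \<subseteq> A}"

definition quot_dim :: "'a::field mpoly set \<Rightarrow> 'a mpoly set \<Rightarrow> nat" where
  "quot_dim V W = (LEAST n. \<exists>B. finite B \<and> card B = n \<and> B \<subseteq> V \<and> V \<subseteq> lin_span (B \<union> W))"

text \<open>Homogeneous component S_d and the Hilbert function H_J(d) = dim_K(S_d / J_d).\<close>
definition polyS_deg :: "nat \<Rightarrow> nat \<Rightarrow> 'a::field mpoly set" where
  "polyS_deg s d = {p \<in> polyS s. homog_of_deg d p}"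

definition hilbert_fun :: "nat \<Rightarrow> 'a::field mpoly set \<Rightarrow> nat \<Rightarrow> nat" where
  "hilbert_fun s J d = quot_dim (polyS_deg s d) (J \<inter> polyS_deg s d)"

text \<open>Krull dimension of S/J: supremum of lengths k of chains P_0 \<subset> ... \<subset> P_k of prime
  ideals of S containing J.\<close>
definition is_prime_ideal :: "nat \<Rightarrow> 'a::field mpoly set \<Rightarrow> bool" where
  "is_prime_ideal s P \<longleftrightarrow> is_ideal s P \<and> P \<noteq> polyS s \<and>
     (\<forall>a\<in>polyS s. \<forall>b\<in>polyS s. a * b \<in> P \<longrightarrow> a \<in> P \<or> b \<in> P)"

definition krull_dim_quot :: "nat \<Rightarrow> 'a::field mpoly set \<Rightarrow> nat" where
  "krull_dim_quot s J = Sup {k. \<exists>P :: nat \<Rightarrow> 'a mpoly set.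
      (\<forall>i\<le>k. is_prime_ideal s (P i)) \<and> J \<subseteq> P 0 \<and> (\<forall>i<k. P i \<subset> P (Suc i))}"

definition degree_quot :: "nat \<Rightarrow> 'a::field mpoly set \<Rightarrow> real" where
  "degree_quot s J = (let k = krull_dim_quot s J in
     if k \<ge> 1 then fact (k - 1) * lim (\<lambda>d. real (hilbert_fun s J d) / real d ^ (k - 1))
     else real (quot_dim (polyS s) J))"

text \<open>A finite set X of points of P^{s-1}, given by one representative per point.\<close>
definition proj_point_set :: "nat \<Rightarrow> (nat \<Rightarrow> 'a::field) set \<Rightarrow> bool" where
  "proj_point_set s X \<longleftrightarrow>
     (\<forall>\<alpha>\<in>X. (\<forall>i\<ge>s. \<alpha> i = 0) \<and> (\<exists>i<s. \<alpha> i \<noteq> 0)) \<and>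
     (\<forall>\<alpha>\<in>X. \<forall>\<beta>\<in>X. (\<exists>c. \<forall>i. \<beta> i = c * \<alpha> i) \<longrightarrow> \<alpha> = \<beta>)"

end

theory Submission
  imports Defs "HOL-Computational_Algebra.Polynomial" "HOL-Library.Function_Algebras"
begin


definition mv :: "(nat \<Rightarrow> 'b::comm_ring_1) \<Rightarrow> (nat \<Rightarrow>\<^sub>0 nat) \<Rightarrow> 'b" where
  "mv x m = (\<Prod>i\<in>Poly_Mapping.keys m. x i ^ Poly_Mapping.lookup m i)"

definition gev :: "('a::field \<Rightarrow> 'b::comm_ring_1) \<Rightarrow> (nat \<Rightarrow> 'b) \<Rightarrow> 'a mpoly \<Rightarrow> 'b" where
  "gev \<phi> x p = (\<Sum>m\<in>Poly_Mapping.keys p. \<phi> (Poly_Mapping.lookup p m) * mv x m)"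

lemma mv_superset:
  assumes "finite K" "Poly_Mapping.keys m \<subseteq> K"
  shows "mv x m = (\<Prod>i\<in>K. x i ^ Poly_Mapping.lookup m i)"
  unfolding mv_def using assms
  by (intro prod.mono_neutral_left) (auto simp: in_keys_iff)

lemma keys_add_nat: "Poly_Mapping.keys (m + n :: nat \<Rightarrow>\<^sub>0 nat) = Poly_Mapping.keys m \<union> Poly_Mapping.keys n"
  by (auto simp: in_keys_iff lookup_add)

lemma mv_add: "mv x (m + n) = mv x m * mv x n"
proof -
  let ?K = "Poly_Mapping.keys m \<union> Poly_Mapping.keys n"
  have "mv x (m+n) = (\<Prod>i\<in>?K. x i ^ Poly_Mapping.lookup (m+n) i)"
    by (rule mv_superset) (auto simp: keys_add_nat)
  also have "\<dots> = (\<Prod>i\<in>?K. x i ^ Poly_Mapping.lookup m i) * (\<Prod>i\<in>?K. x i ^ Poly_Mapping.lookup n i)"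
    by (simp add: lookup_add power_add prod.distrib)
  also have "\<dots> = mv x m * mv x n"
    by (simp add: mv_superset[symmetric])
  finally show ?thesis .
qed

lemma mv_zero[simp]: "mv x 0 = 1" by (simp add: mv_def)

locale hom = fixes \<phi> :: "'a::field \<Rightarrow> 'b::comm_ring_1"
  assumes add: "\<phi> (a + b) = \<phi> a + \<phi> b" and mult: "\<phi> (a * b) = \<phi> a * \<phi> b"
    and zero: "\<phi> 0 = 0" and one: "\<phi> 1 = 1"
begin

lemma gev_superset:
  assumes "finite K" "Poly_Mapping.keys p \<subseteq> K"
  shows "gev \<phi> x p = (\<Sum>m\<in>K. \<phi> (Poly_Mapping.lookup p m) * mv x m)"
  unfolding gev_def using assms
  by (intro sum.mono_neutral_left) (auto simp: in_keys_iff zero)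

lemma gev_add: "gev \<phi> x (p + q) = gev \<phi> x p + gev \<phi> x q"
  unfolding gev_def
  by (rule setsum_keys_plus_distrib) (auto simp: zero add distrib_right)

lemma gev_0[simp]: "gev \<phi> x 0 = 0" by (simp add: gev_def)

lemma gev_sum: "gev \<phi> x (sum f A) = (\<Sum>a\<in>A. gev \<phi> x (f a))"
  by (induction A rule: infinite_finite_induct) (auto simp: gev_add)

lemma gev_single[simp]: "gev \<phi> x (Poly_Mapping.single m c) = \<phi> c * mv x m"
  by (simp add: gev_def zero)

lemma pm_decomp: "p = (\<Sum>m\<in>Poly_Mapping.keys p. Poly_Mapping.single m (Poly_Mapping.lookup p m))"
  by (rule poly_mapping_eqI) (simp add: lookup_sum lookup_single when_def in_keys_iff
        sum.delta[OF finite_keys] cong: if_cong)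

lemma gev_mult: "gev \<phi> x (p * q) = gev \<phi> x p * gev \<phi> x q"
proof -
  have "p * q = (\<Sum>m\<in>Poly_Mapping.keys p. \<Sum>n\<in>Poly_Mapping.keys q.
      Poly_Mapping.single (m+n) (Poly_Mapping.lookup p m * Poly_Mapping.lookup q n))"
    apply (subst pm_decomp[of p], subst pm_decomp[of q])
    by (simp add: sum_distrib_left sum_distrib_right mult_single) (rule sum.swap)
  then have "gev \<phi> x (p*q) = (\<Sum>m\<in>Poly_Mapping.keys p. \<Sum>n\<in>Poly_Mapping.keys q.
      \<phi> (Poly_Mapping.lookup p m) * mv x m * (\<phi> (Poly_Mapping.lookup q n) * mv x n))"
    by (simp add: gev_sum mult mv_add algebra_simps)
  also have "\<dots> = gev \<phi> x p * gev \<phi> x q"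
    by (simp add: gev_def sum_distrib_left sum_distrib_right) (rule sum.swap)
  finally show ?thesis .
qed

lemma gev_uminus: "gev \<phi> x (- p) = - gev \<phi> x p"
  using gev_add[of x p "-p"] by (simp add: eq_neg_iff_add_eq_0 add.commute)

lemma gev_diff: "gev \<phi> x (p - q) = gev \<phi> x p - gev \<phi> x q"
  using gev_add[of x p "-q"] by (simp add: gev_uminus)

lemma gev_one[simp]: "gev \<phi> x 1 = 1"
  by (metis gev_single mv_zero one mult_1 single_one)

lemma gev_prod: "gev \<phi> x (prod f A) = (\<Prod>a\<in>A. gev \<phi> x (f a))"
  by (induction A rule: infinite_finite_induct) (auto simp: gev_mult)

lemma gev_power: "gev \<phi> x (p ^ n) = gev \<phi> x p ^ n"
  by (induction n) (auto simp: gev_mult)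

end

lemma hom_id: "hom (\<lambda>c::'a::field. c)" by unfold_locales auto
lemma hom_pC: "hom (\<lambda>c::'a::field. [:c:])" by unfold_locales (auto simp: mult_ac)




definition lev :: "(nat \<Rightarrow> 'a::field) \<Rightarrow> 'a mpoly \<Rightarrow> 'a poly" where
  "lev \<alpha> p = gev (\<lambda>c. [:c:]) (\<lambda>i. [:0, \<alpha> i:]) p"

definition var :: "nat \<Rightarrow> 'a::field mpoly" where
  "var i = Poly_Mapping.single (Poly_Mapping.single i 1) 1"

lemma eval_gev: "eval p \<alpha> = gev (\<lambda>c. c) \<alpha> p"
  by (simp add: eval_def gev_def mv_def)

interpretation E: hom "\<lambda>c::'a::field. c" by (rule hom_id)
interpretation L: hom "\<lambda>c::'a::field. [:c:]" by (rule hom_pC)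

lemma eval_add: "eval (p + q) \<alpha> = eval p \<alpha> + eval q \<alpha>" by (simp add: eval_gev E.gev_add)
lemma eval_mult: "eval (p * q) \<alpha> = eval p \<alpha> * eval q \<alpha>" by (simp add: eval_gev E.gev_mult)
lemma eval_diff: "eval (p - q) \<alpha> = eval p \<alpha> - eval q \<alpha>" by (simp add: eval_gev E.gev_diff)
lemma eval_0[simp]: "eval 0 \<alpha> = 0" by (simp add: eval_gev)
lemma eval_1[simp]: "eval 1 \<alpha> = 1" by (simp add: eval_gev)
lemma eval_sum: "eval (sum f A) \<alpha> = (\<Sum>a\<in>A. eval (f a) \<alpha>)" by (simp add: eval_gev E.gev_sum)
lemma eval_prod: "eval (prod f A) \<alpha> = (\<Prod>a\<in>A. eval (f a) \<alpha>)" by (simp add: eval_gev E.gev_prod)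
lemma eval_power: "eval (p ^ n) \<alpha> = eval p \<alpha> ^ n" by (simp add: eval_gev E.gev_power)
lemma eval_const[simp]: "eval (const c) \<alpha> = c" by (simp add: eval_gev const_def)
lemma eval_var[simp]: "eval (var i) \<alpha> = \<alpha> i" by (simp add: eval_gev var_def mv_def)

lemma lev_add: "lev \<alpha> (p + q) = lev \<alpha> p + lev \<alpha> q" by (simp add: lev_def L.gev_add)
lemma lev_mult: "lev \<alpha> (p * q) = lev \<alpha> p * lev \<alpha> q" by (simp add: lev_def L.gev_mult)
lemma lev_diff: "lev \<alpha> (p - q) = lev \<alpha> p - lev \<alpha> q" by (simp add: lev_def L.gev_diff)
lemma lev_0[simp]: "lev \<alpha> 0 = 0" by (simp add: lev_def)
lemma lev_1[simp]: "lev \<alpha> 1 = 1" by (simp add: lev_def)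
lemma lev_sum: "lev \<alpha> (sum f A) = (\<Sum>a\<in>A. lev \<alpha> (f a))" by (simp add: lev_def L.gev_sum)
lemma lev_prod: "lev \<alpha> (prod f A) = (\<Prod>a\<in>A. lev \<alpha> (f a))" by (simp add: lev_def L.gev_prod)
lemma lev_power: "lev \<alpha> (p ^ n) = lev \<alpha> p ^ n" by (simp add: lev_def L.gev_power)
lemma lev_const[simp]: "lev \<alpha> (const c) = [:c:]" by (simp add: lev_def const_def)
lemma lev_var[simp]: "lev \<alpha> (var i) = [:0, \<alpha> i:]" by (simp add: lev_def var_def mv_def)

lemma const_mult: "eval (const c * p) \<alpha> = c * eval p \<alpha>" by (simp add: eval_mult)
lemma const_1: "const 1 = (1::'a::field mpoly)" by (simp add: const_def)

lemma mdeg_superset: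
  assumes "finite K" "Poly_Mapping.keys m \<subseteq> K"
  shows "mdeg m = (\<Sum>i\<in>K. Poly_Mapping.lookup m i)"
  unfolding mdeg_def using assms
  by (intro sum.mono_neutral_left) (auto simp: in_keys_iff)

lemma mdeg_add: "mdeg (m + n) = mdeg m + mdeg n"
proof -
  let ?K = "Poly_Mapping.keys m \<union> Poly_Mapping.keys n"
  have "mdeg (m+n) = (\<Sum>i\<in>?K. Poly_Mapping.lookup (m+n) i)"
    by (rule mdeg_superset) (auto simp: keys_add_nat)
  also have "\<dots> = mdeg m + mdeg n"
    by (simp add: lookup_add sum.distrib mdeg_superset[symmetric])
  finally show ?thesis .
qed

lemma mdeg_0_iff: "mdeg m = 0 \<longleftrightarrow> m = 0"
  by (auto simp: mdeg_def in_keys_iff poly_mapping_eqI)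

lemma mdeg_single[simp]: "mdeg (Poly_Mapping.single i k) = k"
  by (simp add: mdeg_def)

lemma prod_monom: "(\<Prod>i\<in>A. monom (f i) (g i)) = monom (\<Prod>i\<in>A. f i) (\<Sum>i\<in>A. g i)"
  by (induction A rule: infinite_finite_induct) (auto simp: mult_monom)

lemma mv_line: "mv (\<lambda>i. [:0, \<alpha> i:]) m = monom (mv \<alpha> m) (mdeg m)"
proof -
  have "[:0, a:] = monom a 1" for a :: 'a by (simp add: monom_Suc monom_0)
  then have "mv (\<lambda>i. [:0, \<alpha> i:]) m = (\<Prod>i\<in>Poly_Mapping.keys m. monom (\<alpha> i ^ Poly_Mapping.lookup m i) (Poly_Mapping.lookup m i))"
    by (simp add: mv_def monom_power)
  also have "\<dots> = monom (mv \<alpha> m) (mdeg m)"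
    unfolding mv_def mdeg_def by (rule prod_monom)
  finally show ?thesis .
qed

lemma lev_formula: "lev \<alpha> p = (\<Sum>m\<in>Poly_Mapping.keys p. monom (Poly_Mapping.lookup p m * mv \<alpha> m) (mdeg m))"
  by (simp add: lev_def gev_def mv_line smult_monom[symmetric] monom_0 flip: smult_monom)

lemma eval_formula: "eval p \<alpha> = (\<Sum>m\<in>Poly_Mapping.keys p. Poly_Mapping.lookup p m * mv \<alpha> m)"
  by (simp add: eval_gev gev_def)

lemma lev_homog:
  assumes "homog_of_deg d p" shows "lev \<alpha> p = monom (eval p \<alpha>) d"
  using assms unfolding homog_of_deg_def
  by (simp add: lev_formula eval_formula monom_sum)

lemma coeff_lev: "coeff (lev \<alpha> p) e =
   (\<Sum>m\<in>{m\<in>Poly_Mapping.keys p. mdeg m = e}. Poly_Mapping.lookup p m * mv \<alpha> m)"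
  by (simp add: lev_formula coeff_sum sum.inter_filter eq_commute)

lemma mv_zero_pt: "mv (\<lambda>_. 0::'a::field) m = (if m = 0 then 1 else 0)"
proof (cases "m = 0")
  case False
  then obtain i where "i \<in> Poly_Mapping.keys m" by (metis keys_eq_empty equals0I)
  then show ?thesis using False unfolding mv_def
    by (intro trans[OF prod_zero]) (auto simp: in_keys_iff)
qed (simp add: mv_def)

lemma eval_at_0: "eval p (\<lambda>_. 0) = coeff (lev \<alpha> p) 0"
proof -
  have "eval p (\<lambda>_. 0) = (\<Sum>m\<in>{m\<in>Poly_Mapping.keys p. m = 0}. Poly_Mapping.lookup p m)"
    unfolding eval_formula mv_zero_pt sum.inter_filter[OF finite_keys]
    by (rule sum.cong) auto
  also have "\<dots> = coeff (lev \<alpha> p) 0"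
    by (simp add: coeff_lev mdeg_0_iff mv_def cong: conj_cong)
  finally show ?thesis .
qed





lemma keys_diff_pm: "Poly_Mapping.keys (p - q :: 'a::field mpoly) \<subseteq> Poly_Mapping.keys p \<union> Poly_Mapping.keys q"
  by (auto simp: in_keys_iff lookup_minus)

lemma keys_uminus_pm: "Poly_Mapping.keys (- p :: 'a::field mpoly) = Poly_Mapping.keys p"
  by (auto simp: in_keys_iff)

lemma keys_mult_pm: "Poly_Mapping.keys (p * q :: 'a::field mpoly) \<subseteq> {a + b | a b. a \<in> Poly_Mapping.keys p \<and> b \<in> Poly_Mapping.keys q}"
  by (rule keys_mult)

lemma polyS_0[simp]: "0 \<in> polyS s" by (simp add: polyS_def)
lemma polyS_1[simp]: "1 \<in> polyS s" by (simp add: polyS_def)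
lemma polyS_const[simp]: "const c \<in> polyS s" by (simp add: polyS_def const_def)
lemma polyS_var: "i < s \<Longrightarrow> var i \<in> polyS s" by (simp add: polyS_def var_def)
lemma polyS_add: "p \<in> polyS s \<Longrightarrow> q \<in> polyS s \<Longrightarrow> p + q \<in> polyS s"
  unfolding polyS_def using keys_add[of p q] by blast
lemma polyS_diff: "p \<in> polyS s \<Longrightarrow> q \<in> polyS s \<Longrightarrow> p - q \<in> polyS s"
  unfolding polyS_def using keys_diff_pm[of p q] by blast
lemma polyS_mult: "p \<in> polyS s \<Longrightarrow> q \<in> polyS s \<Longrightarrow> p * q \<in> polyS s"
  unfolding polyS_def using keys_mult_pm[of p q] by (force simp: keys_add_nat)
lemma polyS_sum: "(\<And>a. a \<in> A \<Longrightarrow> f a \<in> polyS s) \<Longrightarrow> sum f A \<in> polyS s"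
  by (induction A rule: infinite_finite_induct) (auto intro: polyS_add)
lemma polyS_prod: "(\<And>a. a \<in> A \<Longrightarrow> f a \<in> polyS s) \<Longrightarrow> prod f A \<in> polyS s"
  by (induction A rule: infinite_finite_induct) (auto intro: polyS_mult)
lemma polyS_power: "p \<in> polyS s \<Longrightarrow> p ^ n \<in> polyS s"
  by (induction n) (auto intro: polyS_mult)

lemma homog_0[simp]: "homog_of_deg d 0" by (simp add: homog_of_deg_def)
lemma homog_const: "homog_of_deg 0 (const c)" by (simp add: homog_of_deg_def const_def mdeg_def)
lemma homog_var: "homog_of_deg 1 (var i)" by (simp add: homog_of_deg_def var_def)
lemma homog_add: "homog_of_deg d p \<Longrightarrow> homog_of_deg d q \<Longrightarrow> homog_of_deg d (p + q)"
  unfolding homog_of_deg_def using keys_add[of p q] by blast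
lemma homog_diff: "homog_of_deg d p \<Longrightarrow> homog_of_deg d q \<Longrightarrow> homog_of_deg d (p - q)"
  unfolding homog_of_deg_def using keys_diff_pm[of p q] by blast
lemma homog_mult: "homog_of_deg a p \<Longrightarrow> homog_of_deg b q \<Longrightarrow> homog_of_deg (a + b) (p * q)"
  unfolding homog_of_deg_def using keys_mult_pm[of p q] by (force simp: mdeg_add)
lemma homog_sum: "(\<And>a. a \<in> A \<Longrightarrow> homog_of_deg d (f a)) \<Longrightarrow> homog_of_deg d (sum f A)"
  by (induction A rule: infinite_finite_induct) (auto intro: homog_add)
lemma homog_prod: "(\<And>a. a \<in> A \<Longrightarrow> homog_of_deg (g a) (f a)) \<Longrightarrow> homog_of_deg (sum g A) (prod f A)"
proof (induction A rule: infinite_finite_induct)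
  case (infinite A) then show ?case by (simp add: homog_of_deg_def mdeg_def)
next
  case empty then show ?case by (simp add: homog_of_deg_def mdeg_def)
next
  case (insert x F) then show ?case by (auto intro: homog_mult)
qed
lemma homog_power: "homog_of_deg d p \<Longrightarrow> homog_of_deg (n * d) (p ^ n)"
proof (induction n)
  case 0 then show ?case by (simp add: homog_of_deg_def mdeg_def)
next
  case (Suc n) then show ?case using homog_mult[of d p "n*d" "p^n"] by simp
qed
lemma homog_cmult: "homog_of_deg d p \<Longrightarrow> homog_of_deg d (const c * p)"
  using homog_mult[OF homog_const] by fastforce



section \<open>ideals\<close>

lemma is_ideal_polyS: "is_ideal s (polyS s)"
  by (auto simp: is_ideal_def intro: polyS_add polyS_mult)

lemma ideal_gen_ideal: "G \<subseteq> polyS s \<Longrightarrow> is_ideal s (ideal_gen s G)"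
  unfolding ideal_gen_def is_ideal_def
  apply (intro conjI)
  using is_ideal_polyS[of s] by (auto simp: is_ideal_def)

lemma ideal_gen_sup: "G \<subseteq> ideal_gen s G" by (auto simp: ideal_gen_def)

lemma ideal_gen_least: "is_ideal s J \<Longrightarrow> G \<subseteq> J \<Longrightarrow> ideal_gen s G \<subseteq> J"
  by (auto simp: ideal_gen_def)

lemma ideal_sum: "is_ideal s J \<Longrightarrow> (\<And>a. a \<in> A \<Longrightarrow> f a \<in> J) \<Longrightarrow> sum f A \<in> J"
  by (induction A rule: infinite_finite_induct) (auto simp: is_ideal_def)

lemma ideal_uminus: "is_ideal s J \<Longrightarrow> a \<in> J \<Longrightarrow> - a \<in> J"
proof -
  assume "is_ideal s J" "a \<in> J"
  then have "const (-1) * a \<in> J" by (auto simp: is_ideal_def)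
  moreover have "const (-1) * a = - a"
    by (simp add: const_def single_uminus)
  ultimately show ?thesis by simp
qed

lemma ideal_diff: "is_ideal s J \<Longrightarrow> a \<in> J \<Longrightarrow> b \<in> J \<Longrightarrow> a - b \<in> J"
  using ideal_uminus[of s J b] by (auto simp: is_ideal_def)

lemma ideal_mult_right: "is_ideal s J \<Longrightarrow> a \<in> J \<Longrightarrow> h \<in> polyS s \<Longrightarrow> a * h \<in> J"
  by (auto simp: is_ideal_def mult.commute)

definition Zid :: "nat \<Rightarrow> (nat \<Rightarrow> 'a::field) set \<Rightarrow> 'a mpoly set" where
  "Zid s Y = {p \<in> polyS s. \<forall>\<alpha>\<in>Y. eval p \<alpha> = 0}"

definition Lid :: "nat \<Rightarrow> (nat \<Rightarrow> 'a::field) set \<Rightarrow> 'a mpoly set" where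
  "Lid s Y = {p \<in> polyS s. \<forall>\<alpha>\<in>Y. lev \<alpha> p = 0}"

lemma Zid_ideal: "is_ideal s (Zid s Y)"
  by (auto simp: is_ideal_def Zid_def eval_add eval_mult intro: polyS_add polyS_mult)

lemma Lid_ideal: "is_ideal s (Lid s Y)"
  by (auto simp: is_ideal_def Lid_def lev_add lev_mult intro: polyS_add polyS_mult)



section \<open>homogeneous components\<close>

definition hc :: "'a::field mpoly \<Rightarrow> nat \<Rightarrow> 'a mpoly" where
  "hc p e = (\<Sum>m\<in>{m\<in>Poly_Mapping.keys p. mdeg m = e}. Poly_Mapping.single m (Poly_Mapping.lookup p m))"

lemma hc_decomp: "p = (\<Sum>e\<in>mdeg ` Poly_Mapping.keys p. hc p e)"
proof -
  have "p = (\<Sum>m\<in>Poly_Mapping.keys p. Poly_Mapping.single m (Poly_Mapping.lookup p m))"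
    by (rule E.pm_decomp)
  also have "\<dots> = (\<Sum>e\<in>mdeg ` Poly_Mapping.keys p. hc p e)"
    unfolding hc_def by (rule sum.image_gen) simp
  finally show ?thesis .
qed

lemma keys_hc: "Poly_Mapping.keys (hc p e) \<subseteq> {m\<in>Poly_Mapping.keys p. mdeg m = e}"
  unfolding hc_def by (rule order_trans[OF keys_sum]) auto

lemma hc_homog: "homog_of_deg e (hc p e)"
  using keys_hc[of p e] unfolding homog_of_deg_def by auto

lemma hc_polyS: "p \<in> polyS s \<Longrightarrow> hc p e \<in> polyS s"
  using keys_hc[of p e] unfolding polyS_def by auto

lemma eval_hc: "eval (hc p e) \<alpha> = coeff (lev \<alpha> p) e"
  unfolding hc_def eval_gev E.gev_sum coeff_lev by simp




lemma I_ideal: "is_ideal s (vanishing_ideal s X)"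
  unfolding vanishing_ideal_def by (rule ideal_gen_ideal) auto

lemma I_sub_Zid: "vanishing_ideal s X \<subseteq> Zid s X"
  unfolding vanishing_ideal_def by (rule ideal_gen_least[OF Zid_ideal]) (auto simp: Zid_def)

lemma gen_in_Lid: "g \<in> polyS s \<Longrightarrow> homogeneous g \<Longrightarrow> \<forall>\<alpha>\<in>X. eval g \<alpha> = 0 \<Longrightarrow> g \<in> Lid s X"
proof -
  assume a: "g \<in> polyS s" "homogeneous g" "\<forall>\<alpha>\<in>X. eval g \<alpha> = 0"
  then obtain d where "homog_of_deg d g" unfolding homogeneous_def by blast
  then have "lev \<alpha> g = monom (eval g \<alpha>) d" for \<alpha> by (rule lev_homog)
  with a show ?thesis by (simp add: Lid_def)
qed

lemma I_eq_Lid: "vanishing_ideal s X = Lid s X"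
proof
  show "vanishing_ideal s X \<subseteq> Lid s X"
    unfolding vanishing_ideal_def
    by (rule ideal_gen_least[OF Lid_ideal]) (auto intro: gen_in_Lid)
next
  show "Lid s X \<subseteq> vanishing_ideal s X"
  proof
    fix p assume p: "p \<in> Lid s X"
    have "hc p e \<in> vanishing_ideal s X" for e
    proof -
      have "hc p e \<in> polyS s" using p by (simp add: Lid_def hc_polyS)
      moreover have "homogeneous (hc p e)" using hc_homog[of e p] by (auto simp: homogeneous_def)
      moreover have "\<forall>\<alpha>\<in>X. eval (hc p e) \<alpha> = 0" using p by (simp add: Lid_def eval_hc)
      ultimately have "hc p e \<in> {g \<in> polyS s. homogeneous g \<and> (\<forall>\<alpha>\<in>X. eval g \<alpha> = 0)}" by simp
      then show ?thesis unfolding vanishing_ideal_def using ideal_gen_sup by (rule subsetD[rotated])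
    qed
    then have "(\<Sum>e\<in>mdeg ` Poly_Mapping.keys p. hc p e) \<in> vanishing_ideal s X"
      by (intro ideal_sum[OF I_ideal])
    then show "p \<in> vanishing_ideal s X" using hc_decomp[of p] by metis
  qed
qed





lemma separate:
  assumes P: "proj_point_set s X" and b: "\<beta> \<in> X" and g: "\<gamma> \<in> X" and ne: "\<beta> \<noteq> \<gamma>"
  shows "\<exists>l. l \<in> polyS s \<and> homog_of_deg 1 l \<and> eval l \<gamma> = 0 \<and> eval l \<beta> \<noteq> 0"
proof -
  from P g obtain j where j: "j < s" "\<gamma> j \<noteq> 0" unfolding proj_point_set_def by blast
  define c where "c = \<beta> j / \<gamma> j"
  have "\<not> (\<forall>i. \<beta> i = c * \<gamma> i)"
  proof
    assume "\<forall>i. \<beta> i = c * \<gamma> i"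
    then have "\<gamma> = \<beta>" using P b g unfolding proj_point_set_def by blast
    with ne show False by simp
  qed
  then obtain i where i: "\<beta> i \<noteq> c * \<gamma> i" by blast
  have "i < s"
  proof (rule ccontr)
    assume "\<not> i < s"
    then have "\<beta> i = 0" "\<gamma> i = 0" using P b g unfolding proj_point_set_def by auto
    with i show False by simp
  qed
  define l where "l = const (\<gamma> j) * var i - const (\<gamma> i) * var j"
  have "l \<in> polyS s" unfolding l_def using \<open>i < s\<close> j
    by (intro polyS_diff polyS_mult polyS_const polyS_var)
  moreover have "homog_of_deg 1 l" unfolding l_def
    by (intro homog_diff homog_cmult homog_var)
  moreover have "eval l \<gamma> = 0" unfolding l_def by (simp add: eval_diff eval_mult)
  moreover have "eval l \<beta> \<noteq> 0"
  proof
    assume "eval l \<beta> = 0"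
    then have "\<gamma> j * \<beta> i = \<gamma> i * \<beta> j" unfolding l_def by (simp add: eval_diff eval_mult)
    then have "\<beta> i = c * \<gamma> i" using j unfolding c_def by (simp add: field_simps)
    with i show False by simp
  qed
  ultimately show ?thesis by blast
qed

lemma interp_point:
  assumes P: "proj_point_set s X" and Z: "finite Z" "Z \<subseteq> X" and b: "\<beta> \<in> Z"
    and e: "card Z - 1 \<le> e"
  shows "\<exists>L. L \<in> polyS s \<and> homog_of_deg e L \<and> eval L \<beta> = 1 \<and> (\<forall>\<gamma>\<in>Z-{\<beta>}. eval L \<gamma> = 0)"
proof -
  have "\<forall>\<gamma>\<in>Z-{\<beta>}. \<exists>l. l \<in> polyS s \<and> homog_of_deg 1 l \<and> eval l \<gamma> = 0 \<and> eval l \<beta> \<noteq> 0"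
    using separate[OF P] Z b by blast
  then obtain l where l: "\<And>\<gamma>. \<gamma>\<in>Z-{\<beta>} \<Longrightarrow> l \<gamma> \<in> polyS s \<and> homog_of_deg 1 (l \<gamma>) \<and> eval (l \<gamma>) \<gamma> = 0 \<and> eval (l \<gamma>) \<beta> \<noteq> 0"
    by metis
  from P b Z obtain k where k: "k < s" "\<beta> k \<noteq> 0" unfolding proj_point_set_def by blast
  define n where "n = card (Z - {\<beta>})"
  have n: "n = card Z - 1" unfolding n_def using Z b by simp
  define P0 where "P0 = (\<Prod>\<gamma>\<in>Z-{\<beta>}. l \<gamma>) * var k ^ (e - n)"
  have P0S: "P0 \<in> polyS s" unfolding P0_def using l k
    by (intro polyS_mult polyS_prod polyS_power polyS_var) auto
  have "homog_of_deg ((\<Sum>\<gamma>\<in>Z-{\<beta>}. 1) + (e - n) * 1) P0" unfolding P0_def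
    by (intro homog_mult homog_prod homog_power homog_var) (use l in auto)
  then have P0h: "homog_of_deg e P0" using n e by (simp add: n_def)
  have P0b: "eval P0 \<beta> \<noteq> 0" unfolding P0_def using l k Z
    by (simp add: eval_mult eval_prod eval_power)
  have P0z: "eval P0 \<gamma> = 0" if "\<gamma> \<in> Z - {\<beta>}" for \<gamma>
  proof -
    have "(\<Prod>\<gamma>'\<in>Z-{\<beta>}. eval (l \<gamma>') \<gamma>) = 0"
      using that l Z by (intro prod_zero) auto
    then show ?thesis unfolding P0_def by (simp add: eval_mult eval_prod)
  qed
  define L where "L = const (1 / eval P0 \<beta>) * P0"
  have "L \<in> polyS s" unfolding L_def using P0S by (intro polyS_mult polyS_const)
  moreover have "homog_of_deg e L" unfolding L_def using P0h by (rule homog_cmult)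
  moreover have "eval L \<beta> = 1" unfolding L_def using P0b by (simp add: eval_mult)
  moreover have "\<forall>\<gamma>\<in>Z-{\<beta>}. eval L \<gamma> = 0" unfolding L_def using P0z by (simp add: eval_mult)
  ultimately show ?thesis by blast
qed

lemma interp_basis:
  assumes P: "proj_point_set s X" and Z: "finite Z" "Z \<subseteq> X" and e: "card Z - 1 \<le> e"
  obtains L where "\<And>\<beta>. \<beta> \<in> Z \<Longrightarrow> L \<beta> \<in> polyS s \<and> homog_of_deg e (L \<beta>)"
    "\<And>\<beta> \<gamma>. \<beta> \<in> Z \<Longrightarrow> \<gamma> \<in> Z \<Longrightarrow> eval (L \<beta>) \<gamma> = (if \<gamma> = \<beta> then 1 else 0)"
proof -
  have "\<forall>\<beta>\<in>Z. \<exists>L. L \<in> polyS s \<and> homog_of_deg e L \<and> eval L \<beta> = 1 \<and> (\<forall>\<gamma>\<in>Z-{\<beta>}. eval L \<gamma> = 0)"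
    using interp_point[OF P Z _ e] by blast
  then obtain L where L: "\<And>\<beta>. \<beta>\<in>Z \<Longrightarrow> L \<beta> \<in> polyS s \<and> homog_of_deg e (L \<beta>) \<and> eval (L \<beta>) \<beta> = 1 \<and> (\<forall>\<gamma>\<in>Z-{\<beta>}. eval (L \<beta>) \<gamma> = 0)"
    by metis
  show ?thesis by (rule that[of L]) (use L in auto)
qed

lemma interp_values:
  assumes P: "proj_point_set s X" and Z: "finite Z" "Z \<subseteq> X" and e: "card Z - 1 \<le> e"
  shows "\<exists>a. a \<in> polyS s \<and> homog_of_deg e a \<and> (\<forall>\<beta>\<in>Z. eval a \<beta> = v \<beta>)"
proof -
  obtain L where L1: "\<And>\<beta>. \<beta> \<in> Z \<Longrightarrow> L \<beta> \<in> polyS s \<and> homog_of_deg e (L \<beta>)"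
    and L2: "\<And>\<beta> \<gamma>. \<beta> \<in> Z \<Longrightarrow> \<gamma> \<in> Z \<Longrightarrow> eval (L \<beta>) \<gamma> = (if \<gamma> = \<beta> then 1 else 0)"
    using interp_basis[OF P Z e] by blast
  define a where "a = (\<Sum>\<beta>\<in>Z. const (v \<beta>) * L \<beta>)"
  have "a \<in> polyS s" unfolding a_def using L1 by (intro polyS_sum polyS_mult polyS_const) auto
  moreover have "homog_of_deg e a" unfolding a_def using L1 by (intro homog_sum homog_cmult) auto
  moreover have "eval a \<beta> = v \<beta>" if "\<beta> \<in> Z" for \<beta>
  proof -
    have "eval a \<beta> = (\<Sum>\<gamma>\<in>Z. v \<gamma> * (if \<beta> = \<gamma> then 1 else 0))"
      unfolding a_def eval_sum using that L2 by (intro sum.cong) (auto simp: eval_mult)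
    also have "\<dots> = v \<beta>" using that Z by (simp add: if_distrib sum.delta cong: if_cong)
    finally show ?thesis .
  qed
  ultimately show ?thesis by blast
qed




lemma I_polyS: "vanishing_ideal s X \<subseteq> polyS s"
  using I_ideal[of s X] by (simp add: is_ideal_def)

lemma gen_in_I: "g \<in> polyS s \<Longrightarrow> homogeneous g \<Longrightarrow> \<forall>\<alpha>\<in>X. eval g \<alpha> = 0 \<Longrightarrow> g \<in> vanishing_ideal s X"
  unfolding vanishing_ideal_def by (rule subsetD[OF ideal_gen_sup]) simp

lemma colon_iff:
  assumes X: "finite X" and P: "proj_point_set s X"
    and f: "f \<in> polyS s" "homog_of_deg df f"
  shows "colon s (vanishing_ideal s X) f \<noteq> vanishing_ideal s X \<longleftrightarrow> zero_set X f \<noteq> {}"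
proof
  assume "zero_set X f \<noteq> {}"
  then obtain \<alpha> where a: "\<alpha> \<in> X" "eval f \<alpha> = 0" by (auto simp: zero_set_def)
  obtain h where h: "h \<in> polyS s" "homog_of_deg (card X - 1) h" "eval h \<alpha> = 1"
     "\<forall>\<gamma>\<in>X-{\<alpha>}. eval h \<gamma> = 0"
    using interp_point[OF P X subset_refl a(1)] by blast
  have "h * f \<in> vanishing_ideal s X"
  proof (rule gen_in_I)
    show "h * f \<in> polyS s" using h f by (intro polyS_mult)
    show "homogeneous (h * f)" using homog_mult[OF h(2) f(2)] by (auto simp: homogeneous_def)
    show "\<forall>\<gamma>\<in>X. eval (h * f) \<gamma> = 0"
    proof
      fix \<gamma> assume "\<gamma> \<in> X"
      then show "eval (h * f) \<gamma> = 0"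
        using h(4) a(2) by (cases "\<gamma> = \<alpha>") (simp_all add: eval_mult)
    qed
  qed
  then have "h \<in> colon s (vanishing_ideal s X) f" using h by (simp add: colon_def)
  moreover have "h \<notin> vanishing_ideal s X"
  proof
    assume "h \<in> vanishing_ideal s X"
    then have "h \<in> Zid s X" using I_sub_Zid[of s X] by blast
    then have "eval h \<alpha> = 0" using a(1) by (simp add: Zid_def)
    with h(3) show False by simp
  qed
  ultimately show "colon s (vanishing_ideal s X) f \<noteq> vanishing_ideal s X" by blast
next
  assume ne: "colon s (vanishing_ideal s X) f \<noteq> vanishing_ideal s X"
  show "zero_set X f \<noteq> {}"
  proof
    assume Y: "zero_set X f = {}"
    have "colon s (vanishing_ideal s X) f = vanishing_ideal s X"
    proof
      show "vanishing_ideal s X \<subseteq> colon s (vanishing_ideal s X) f"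
      proof
        fix h assume h: "h \<in> vanishing_ideal s X"
        have "h \<in> polyS s" using h I_polyS[of s X] by blast
        moreover have "h * f \<in> vanishing_ideal s X" by (rule ideal_mult_right[OF I_ideal h f(1)])
        ultimately show "h \<in> colon s (vanishing_ideal s X) f" by (simp add: colon_def)
      qed
    next
      show "colon s (vanishing_ideal s X) f \<subseteq> vanishing_ideal s X"
      proof
        fix h assume "h \<in> colon s (vanishing_ideal s X) f"
        then have h: "h \<in> polyS s" "h * f \<in> Lid s X" by (auto simp: colon_def I_eq_Lid)
        have "lev \<alpha> h = 0" if "\<alpha> \<in> X" for \<alpha>
        proof -
          have "eval f \<alpha> \<noteq> 0" using Y that by (auto simp: zero_set_def)
          then have "lev \<alpha> f \<noteq> 0" using lev_homog[OF f(2)] by simp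
          moreover have "lev \<alpha> h * lev \<alpha> f = 0" using h that by (auto simp: Lid_def lev_mult)
          ultimately show ?thesis by simp
        qed
        then show "h \<in> vanishing_ideal s X" using h by (simp add: I_eq_Lid Lid_def)
      qed
    qed
    with ne show False by simp
  qed
qed




definition Wd :: "nat \<Rightarrow> (nat \<Rightarrow> 'a::field) set \<Rightarrow> nat \<Rightarrow> 'a mpoly set" where
  "Wd s Y d = {g \<in> polyS_deg s d. \<forall>\<beta>\<in>Y. eval g \<beta> = 0}"

definition fscale :: "'a::field \<Rightarrow> ('x \<Rightarrow> 'a) \<Rightarrow> ('x \<Rightarrow> 'a)" where
  "fscale c v = (\<lambda>x. c * v x)"

interpretation FV: vector_space "fscale :: 'a::field \<Rightarrow> ('x \<Rightarrow> 'a) \<Rightarrow> _"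
  by unfold_locales (auto simp: fscale_def fun_eq_iff algebra_simps)

lemma indep_crit:
  assumes "\<And>T u v. T \<subseteq> S \<Longrightarrow> finite T \<Longrightarrow> (\<Sum>v\<in>T. fscale (u v) v) = 0 \<Longrightarrow> v \<in> T \<Longrightarrow> u v = 0"
  shows "FV.independent (S :: ('x \<Rightarrow> 'a::field) set)"
  using assms FV.independent_explicit_finite_subsets[of S] by blast

lemma sum_fun_apply: "(\<Sum>a\<in>A. (f a :: 'x \<Rightarrow> 'b::comm_monoid_add)) x = (\<Sum>a\<in>A. f a x)"
  by (induction A rule: infinite_finite_induct) auto

lemma units_inj:
  fixes E :: "'x \<Rightarrow> 'x \<Rightarrow> 'a::field"
  assumes E: "\<And>\<beta> \<gamma>. \<beta> \<in> Y \<Longrightarrow> \<gamma> \<in> Y \<Longrightarrow> E \<beta> \<gamma> = (if \<gamma> = \<beta> then 1 else 0)"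
  shows "inj_on E Y"
proof (rule inj_onI)
  fix \<beta> \<gamma> assume a: "\<beta> \<in> Y" "\<gamma> \<in> Y" "E \<beta> = E \<gamma>"
  then have "E \<beta> \<beta> = E \<gamma> \<beta>" by simp
  then show "\<beta> = \<gamma>" using E[OF a(1) a(1)] E[OF a(2) a(1)] by (auto split: if_splits)
qed

lemma units_indep:
  fixes E :: "'x \<Rightarrow> 'x \<Rightarrow> 'a::field"
  assumes E: "\<And>\<beta> \<gamma>. \<beta> \<in> Y \<Longrightarrow> \<gamma> \<in> Y \<Longrightarrow> E \<beta> \<gamma> = (if \<gamma> = \<beta> then 1 else 0)"
  shows "FV.independent (E ` Y)"
proof (rule indep_crit)
  fix T u v assume T: "T \<subseteq> E ` Y" "finite T" and sum0: "(\<Sum>v\<in>T. fscale (u v) v) = 0" and v: "v \<in> T"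
  obtain \<beta> where b: "\<beta> \<in> Y" "v = E \<beta>" using T v by blast
  have key: "w \<beta> = (if w = v then 1 else 0)" if wT: "w \<in> T" for w
  proof -
    obtain \<gamma> where g: "\<gamma> \<in> Y" "w = E \<gamma>" using T wT by blast
    show ?thesis
    proof (cases "\<gamma> = \<beta>")
      case True then show ?thesis using g b E[OF b(1) b(1)] by simp
    next
      case False
      then have "w \<noteq> v" using g b units_inj[OF E] by (auto dest: inj_onD)
      then show ?thesis using g b E[OF g(1) b(1)] False by auto
    qed
  qed
  have "0 = (\<Sum>w\<in>T. fscale (u w) w) \<beta>" using sum0 by simp
  also have "\<dots> = (\<Sum>w\<in>T. u w * (if w = v then 1 else 0))"
    unfolding sum_fun_apply fscale_def
  proof (rule sum.cong[OF refl])
    fix w assume "w \<in> T"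
    from key[OF this] show "u w * w \<beta> = u w * (if w = v then 1 else 0)" by simp
  qed
  also have "\<dots> = u v" using T(2) v by (simp add: if_distrib sum.delta cong: if_cong)
  finally show "u v = 0" by simp
qed
lemma lin_span_lower:
  fixes Y :: "(nat \<Rightarrow> 'a::field) set"
  assumes Y: "finite Y" and L1: "\<And>\<beta>. \<beta> \<in> Y \<Longrightarrow> L \<beta> \<in> V"
    and L2: "\<And>\<beta> \<gamma>. \<beta> \<in> Y \<Longrightarrow> \<gamma> \<in> Y \<Longrightarrow> eval (L \<beta>) \<gamma> = (if \<gamma> = \<beta> then 1 else 0)"
    and W: "\<And>w \<beta>. w \<in> W \<Longrightarrow> \<beta> \<in> Y \<Longrightarrow> eval w \<beta> = 0"
    and B: "finite B" "V \<subseteq> lin_span (B \<union> W)"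
  shows "card Y \<le> card B"
proof -
  define ev :: "'a mpoly \<Rightarrow> (nat \<Rightarrow> 'a) \<Rightarrow> 'a" where "ev a = (\<lambda>\<gamma>. if \<gamma> \<in> Y then eval a \<gamma> else 0)" for a
  have ev_sum: "ev (\<Sum>a\<in>B'. const (c a) * a) = (\<Sum>a\<in>B'. fscale (c a) (ev a))" for B' c
    by (rule ext) (simp add: ev_def sum_fun_apply fscale_def eval_sum eval_mult)
  have evL: "ev (L \<beta>) \<gamma> = (if \<gamma> = \<beta> \<and> \<gamma> \<in> Y then 1 else 0)" if "\<beta> \<in> Y" for \<beta> \<gamma>
    using L2[OF that] by (auto simp: ev_def)
  let ?S = "(\<lambda>\<beta>. ev (L \<beta>)) ` Y"
  have inj: "inj_on (\<lambda>\<beta>. ev (L \<beta>)) Y"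
    by (rule units_inj) (simp add: evL)
  have span: "?S \<subseteq> FV.span (ev ` B)"
  proof
    fix v assume "v \<in> ?S"
    then obtain \<beta> where b: "\<beta> \<in> Y" "v = ev (L \<beta>)" by blast
    have "L \<beta> \<in> lin_span (B \<union> W)" using B(2) L1[OF b(1)] by blast
    then obtain B' c where B': "L \<beta> = (\<Sum>a\<in>B'. const (c a) * a)" "finite B'" "B' \<subseteq> B \<union> W"
      unfolding lin_span_def by blast
    have "v = (\<Sum>a\<in>B'. fscale (c a) (ev a))" using b B' ev_sum by simp
    also have "\<dots> \<in> FV.span (ev ` B)"
    proof (rule FV.span_sum)
      fix a assume "a \<in> B'"
      show "fscale (c a) (ev a) \<in> FV.span (ev ` B)"
      proof (cases "a \<in> B")
        case True then show ?thesis by (intro FV.span_scale FV.span_base) auto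
      next
        case False
        then have "a \<in> W" using \<open>a \<in> B'\<close> B' by blast
        then have "ev a = 0" using W by (auto simp: ev_def fun_eq_iff)
        then show ?thesis using FV.span_zero[of "ev ` B"] by (simp add: fscale_def zero_fun_def)
      qed
    qed
    finally show "v \<in> FV.span (ev ` B)" .
  qed
  have indep: "FV.independent ?S"
    by (rule units_indep) (simp add: evL)
  have "card ?S \<le> card (ev ` B)"
    using FV.independent_span_bound[OF finite_imageI[OF B(1)] indep span] by simp
  also have "\<dots> \<le> card B" by (rule card_image_le[OF B(1)])
  finally show ?thesis using card_image[OF inj] by simp
qed




lemma quot_dim_Wd:
  fixes X Y :: "(nat \<Rightarrow> 'a::field) set"
  assumes P: "proj_point_set s X" and Y: "finite Y" "Y \<subseteq> X" and d: "card Y - 1 \<le> d"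
  shows "quot_dim (polyS_deg s d) (Wd s Y d) = card Y"
proof -
  obtain L where L1: "\<And>\<beta>. \<beta> \<in> Y \<Longrightarrow> L \<beta> \<in> polyS s \<and> homog_of_deg d (L \<beta>)"
    and L2: "\<And>\<beta> \<gamma>. \<beta> \<in> Y \<Longrightarrow> \<gamma> \<in> Y \<Longrightarrow> eval (L \<beta>) \<gamma> = (if \<gamma> = \<beta> then 1 else 0)"
    using interp_basis[OF P Y d] by blast
  have inj: "inj_on L Y"
  proof (rule inj_onI)
    fix \<beta> \<gamma> assume a: "\<beta> \<in> Y" "\<gamma> \<in> Y" "L \<beta> = L \<gamma>"
    then have "eval (L \<beta>) \<beta> = eval (L \<gamma>) \<beta>" by simp
    then show "\<beta> = \<gamma>" using L2[OF a(1) a(1)] L2[OF a(2) a(1)] by (auto split: if_splits)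
  qed
  define B0 where "B0 = L ` Y"
  have B0fin: "finite B0" using Y by (simp add: B0_def)
  have cardB0: "card B0 = card Y" using card_image[OF inj] by (simp add: B0_def)
  have B0V: "B0 \<subseteq> polyS_deg s d" using L1 by (auto simp: B0_def polyS_deg_def)
  have span: "polyS_deg s d \<subseteq> lin_span (B0 \<union> Wd s Y d)"
  proof
    fix g :: "'a mpoly" assume g: "g \<in> polyS_deg s d"
    define w where "w = g - (\<Sum>\<beta>\<in>Y. const (eval g \<beta>) * L \<beta>)"
    have wS: "w \<in> polyS s" unfolding w_def using g L1
      by (intro polyS_diff polyS_sum polyS_mult polyS_const) (auto simp: polyS_deg_def)
    have wh: "homog_of_deg d w" unfolding w_def using g L1
      by (intro homog_diff homog_sum homog_cmult) (auto simp: polyS_deg_def)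
    have weval: "eval w \<gamma> = 0" if "\<gamma> \<in> Y" for \<gamma>
    proof -
      have "(\<Sum>\<beta>\<in>Y. eval (const (eval g \<beta>) * L \<beta>) \<gamma>) = (\<Sum>\<beta>\<in>Y. eval g \<beta> * (if \<gamma> = \<beta> then 1 else 0))"
        using that L2 by (intro sum.cong) (auto simp: eval_mult)
      also have "\<dots> = eval g \<gamma>" using that Y by (simp add: if_distrib sum.delta cong: if_cong)
      finally show ?thesis unfolding w_def by (simp add: eval_diff eval_sum)
    qed
    have wW: "w \<in> Wd s Y d" using wS wh weval by (simp add: Wd_def polyS_deg_def)
    have wB0: "w \<notin> B0"
    proof
      assume "w \<in> B0"
      then obtain \<beta> where "\<beta> \<in> Y" "w = L \<beta>" by (auto simp: B0_def)
      then show False using weval[of \<beta>] L2[of \<beta> \<beta>] by simp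
    qed
    define c where "c a = (if a = w then 1 else eval g (inv_into Y L a))" for a
    have "(\<Sum>a\<in>insert w B0. const (c a) * a) = const (c w) * w + (\<Sum>a\<in>B0. const (c a) * a)"
      using B0fin wB0 by simp
    also have "(\<Sum>a\<in>B0. const (c a) * a) = (\<Sum>\<beta>\<in>Y. const (c (L \<beta>)) * L \<beta>)"
      unfolding B0_def using sum.reindex[OF inj, of "\<lambda>a. const (c a) * a"] by simp
    also have "\<dots> = (\<Sum>\<beta>\<in>Y. const (eval g \<beta>) * L \<beta>)"
    proof (rule sum.cong[OF refl])
      fix \<beta> assume b: "\<beta> \<in> Y"
      have "L \<beta> \<noteq> w" using wB0 b by (auto simp: B0_def)
      then show "const (c (L \<beta>)) * L \<beta> = const (eval g \<beta>) * L \<beta>"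
        using inv_into_f_f[OF inj b] by (simp add: c_def)
    qed
    also have "const (c w) * w = w" by (simp add: c_def const_1)
    finally have "g = (\<Sum>a\<in>insert w B0. const (c a) * a)" by (simp add: w_def)
    moreover have "finite (insert w B0)" "insert w B0 \<subseteq> B0 \<union> Wd s Y d" using B0fin wW by auto
    ultimately show "g \<in> lin_span (B0 \<union> Wd s Y d)" unfolding lin_span_def by blast
  qed
  have lower: "card Y \<le> n" if "\<exists>B. finite B \<and> card B = n \<and> B \<subseteq> polyS_deg s d \<and> polyS_deg s d \<subseteq> lin_span (B \<union> Wd s Y d)" for n
  proof -
    from that obtain B where B: "finite B" "card B = n" "polyS_deg s d \<subseteq> lin_span (B \<union> Wd s Y d)" by blast
    have "card Y \<le> card B"
    proof (rule lin_span_lower[OF Y(1), of L "polyS_deg s d" "Wd s Y d"])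
      show "\<And>\<beta>. \<beta> \<in> Y \<Longrightarrow> L \<beta> \<in> polyS_deg s d" using L1 by (simp add: polyS_deg_def)
      show "\<And>\<beta> \<gamma>. \<beta> \<in> Y \<Longrightarrow> \<gamma> \<in> Y \<Longrightarrow> eval (L \<beta>) \<gamma> = (if \<gamma> = \<beta> then 1 else 0)" by (rule L2)
      show "\<And>w \<beta>. w \<in> Wd s Y d \<Longrightarrow> \<beta> \<in> Y \<Longrightarrow> eval w \<beta> = 0" by (simp add: Wd_def)
    qed (use B in auto)
    with B show ?thesis by simp
  qed
  show ?thesis unfolding quot_dim_def
  proof (rule Least_equality)
    show "\<exists>B. finite B \<and> card B = card Y \<and> B \<subseteq> polyS_deg s d \<and> polyS_deg s d \<subseteq> lin_span (B \<union> Wd s Y d)"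
      using B0fin cardB0 B0V span by blast
  qed (rule lower)
qed

lemma J_deg:
  fixes X :: "(nat \<Rightarrow> 'a::field) set"
  assumes X: "finite X" and P: "proj_point_set s X"
    and f: "f \<in> polyS s" "homog_of_deg df f" and d: "df + card X \<le> d"
  shows "ideal_gen s (insert f (vanishing_ideal s X)) \<inter> polyS_deg s d = Wd s (zero_set X f) d"
proof -
  let ?I = "vanishing_ideal s X"
  let ?J = "ideal_gen s (insert f ?I)"
  let ?Y = "zero_set X f"
  have Jid: "is_ideal s ?J" using f(1) I_polyS[of s X] by (intro ideal_gen_ideal) auto
  have fJ: "f \<in> ?J" using ideal_gen_sup by blast
  have IJ: "?I \<subseteq> ?J" using ideal_gen_sup by blast
  have JZ: "?J \<subseteq> Zid s ?Y"
  proof (rule ideal_gen_least[OF Zid_ideal])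
    show "insert f ?I \<subseteq> Zid s ?Y"
    proof
      fix p assume "p \<in> insert f ?I"
      then show "p \<in> Zid s ?Y"
      proof
        assume "p = f" then show ?thesis using f by (auto simp: Zid_def zero_set_def)
      next
        assume "p \<in> ?I"
        then have "p \<in> Zid s X" using I_sub_Zid by blast
        then show ?thesis by (auto simp: Zid_def zero_set_def)
      qed
    qed
  qed
  show ?thesis
  proof
    show "?J \<inter> polyS_deg s d \<subseteq> Wd s ?Y d" using JZ by (auto simp: Wd_def Zid_def)
  next
    show "Wd s ?Y d \<subseteq> ?J \<inter> polyS_deg s d"
    proof
      fix g assume g: "g \<in> Wd s ?Y d"
      let ?Z = "X - ?Y"
      have Zc: "card ?Z - 1 \<le> d - df" using d card_mono[OF X, of ?Z] by auto
      obtain a where a: "a \<in> polyS s" "homog_of_deg (d - df) a" "\<forall>\<beta>\<in>?Z. eval a \<beta> = eval g \<beta> / eval f \<beta>"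
        using interp_values[OF P _ _ Zc, of "\<lambda>\<beta>. eval g \<beta> / eval f \<beta>"] X by auto
      define r where "r = g - a * f"
      have rS: "r \<in> polyS s" unfolding r_def using g a f by (intro polyS_diff polyS_mult) (auto simp: Wd_def polyS_deg_def)
      have "homog_of_deg (d - df + df) (a * f)" by (rule homog_mult[OF a(2) f(2)])
      then have "homog_of_deg d (a * f)" using d by simp
      then have rh: "homog_of_deg d r" unfolding r_def using g by (intro homog_diff) (auto simp: Wd_def polyS_deg_def)
      have reval: "\<forall>\<gamma>\<in>X. eval r \<gamma> = 0"
      proof
        fix \<gamma> assume "\<gamma> \<in> X"
        show "eval r \<gamma> = 0"
        proof (cases "\<gamma> \<in> ?Y")
          case True
          then show ?thesis using g by (auto simp: r_def eval_diff eval_mult Wd_def zero_set_def)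
        next
          case False
          then have "eval f \<gamma> \<noteq> 0" "\<gamma> \<in> ?Z" using \<open>\<gamma> \<in> X\<close> by (auto simp: zero_set_def)
          then show ?thesis using a(3) by (simp add: r_def eval_diff eval_mult)
        qed
      qed
      have "r \<in> ?I" using rS rh reval by (intro gen_in_I) (auto simp: homogeneous_def)
      then have "r \<in> ?J" using IJ by blast
      moreover have "a * f \<in> ?J" using Jid fJ a(1) by (simp add: is_ideal_def)
      ultimately have "r + a * f \<in> ?J" using Jid by (simp add: is_ideal_def)
      then show "g \<in> ?J \<inter> polyS_deg s d" using g by (simp add: r_def Wd_def)
    qed
  qed
qed




lemma pCons_as: "pCons c w = [:c:] + [:0, 1:] * (w::'a::field poly)"
proof -
  have "[:0, 1:] * w = pCons 0 w" by simp
  then show ?thesis by simp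
qed

lemma lev_surj:
  assumes k: "k < s" "\<alpha> k \<noteq> 0"
  shows "\<exists>p\<in>polyS s. lev \<alpha> p = w"
proof (induction w)
  case 0 show ?case by (rule bexI[of _ 0]) auto
next
  case (pCons c w)
  then obtain p where p: "p \<in> polyS s" "lev \<alpha> p = w" by blast
  define p' where "p' = const c + const (1 / \<alpha> k) * var k * p"
  have "p' \<in> polyS s" unfolding p'_def using p k
    by (intro polyS_add polyS_mult polyS_const polyS_var) auto
  moreover have "lev \<alpha> p' = pCons c w"
  proof -
    have e2: "[:1 / \<alpha> k:] * [:0, \<alpha> k:] = [:0, 1:]" using k by (simp add: pCons_one)
    have "lev \<alpha> p' = [:c:] + ([:1 / \<alpha> k:] * [:0, \<alpha> k:]) * w"
      unfolding p'_def lev_add lev_mult lev_const lev_var p(2) by (simp only: mult.assoc)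
    then have "lev \<alpha> p' = [:c:] + [:0, 1:] * w" unfolding e2 .
    then show ?thesis using pCons_as[of c w] by (simp only:)
  qed
  ultimately show ?case by blast
qed

lemma prime_one_notin: "is_prime_ideal s P \<Longrightarrow> 1 \<notin> P"
proof
  assume a: "is_prime_ideal s P" "1 \<in> P"
  have I: "is_ideal s P" using a by (simp add: is_prime_ideal_def)
  have "h \<in> P" if "h \<in> polyS s" for h
  proof -
    have "h * 1 \<in> P" using I a(2) that unfolding is_ideal_def by blast
    then show ?thesis by simp
  qed
  then have "P = polyS s" using I unfolding is_ideal_def by blast
  with a show False by (simp add: is_prime_ideal_def)
qed
lemma prime_prod_notin:
  assumes P: "is_prime_ideal s P" and g: "\<And>a. a \<in> A \<Longrightarrow> g a \<in> polyS s \<and> g a \<notin> P"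
  shows "prod g A \<notin> P"
  using g
proof (induction A rule: infinite_finite_induct)
  case (infinite A) then show ?case using prime_one_notin[OF P] by simp
next
  case empty then show ?case using prime_one_notin[OF P] by simp
next
  case (insert x F)
  have "prod g F \<in> polyS s" using insert by (intro polyS_prod) auto
  moreover have "g x \<in> polyS s" "g x \<notin> P" using insert by auto
  ultimately show ?case using insert P unfolding is_prime_ideal_def by auto
qed

lemma min_elem:
  fixes P :: "'a::field mpoly set"
  assumes P: "is_ideal s P" and sub: "Lid s {\<alpha>} \<subseteq> P"
    and k: "k < s" "\<alpha> k \<noteq> 0" and ex: "a \<in> P" "lev \<alpha> a \<noteq> 0"
  shows "\<exists>q\<in>P. lev \<alpha> q \<noteq> 0 \<and> (\<forall>p\<in>P. lev \<alpha> q dvd lev \<alpha> p)"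
proof -
  obtain q where q: "q \<in> P \<and> lev \<alpha> q \<noteq> 0"
    and qmin: "\<And>p. p \<in> P \<and> lev \<alpha> p \<noteq> 0 \<Longrightarrow> degree (lev \<alpha> q) \<le> degree (lev \<alpha> p)"
    using ex_has_least_nat[of "\<lambda>p. p \<in> P \<and> lev \<alpha> p \<noteq> 0" a "\<lambda>p. degree (lev \<alpha> p)"] ex by blast
  have "lev \<alpha> q dvd lev \<alpha> p" if p: "p \<in> P" for p
  proof (rule ccontr)
    assume nd: "\<not> lev \<alpha> q dvd lev \<alpha> p"
    obtain pw where pw: "pw \<in> polyS s" "lev \<alpha> pw = lev \<alpha> p div lev \<alpha> q" using lev_surj[of k s \<alpha>, OF k] by blast
    have PS: "P \<subseteq> polyS s" using P by (simp add: is_ideal_def)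
    have "p - pw * q \<in> P" using P p q pw by (intro ideal_diff) (auto simp: is_ideal_def)
    moreover have "lev \<alpha> (p - pw * q) = lev \<alpha> p mod lev \<alpha> q"
      using mod_div_mult_eq[of "lev \<alpha> p" "lev \<alpha> q"] by (simp add: lev_diff lev_mult pw(2) algebra_simps)
    moreover have "lev \<alpha> p mod lev \<alpha> q \<noteq> 0" using nd by (simp add: mod_eq_0_iff_dvd)
    ultimately have "degree (lev \<alpha> q) \<le> degree (lev \<alpha> p mod lev \<alpha> q)" using qmin by metis
    moreover have "degree (lev \<alpha> p mod lev \<alpha> q) < degree (lev \<alpha> q)"
      using q \<open>lev \<alpha> p mod lev \<alpha> q \<noteq> 0\<close> by (intro degree_mod_less') auto
    ultimately show False by simp
  qed
  then show ?thesis using q by blast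
qed

lemma lift_eq:
  assumes P: "is_ideal s P" and sub: "Lid s {\<alpha>} \<subseteq> P"
    and x: "x \<in> polyS s" and y: "y \<in> P" and e: "lev \<alpha> x = lev \<alpha> y"
  shows "x \<in> P"
proof -
  have PS: "P \<subseteq> polyS s" using P by (simp add: is_ideal_def)
  have "x - y \<in> Lid s {\<alpha>}" using x y PS e by (auto simp: Lid_def lev_diff intro: polyS_diff)
  then have "x - y \<in> P" using sub by blast
  then have "(x - y) + y \<in> P" using P y unfolding is_ideal_def by blast
  then show ?thesis by simp
qed

lemma no_chain2:
  fixes P0 :: "'a::field mpoly set"
  assumes k: "k < s" "\<alpha> k \<noteq> 0"
    and pr: "is_prime_ideal s P0" "is_prime_ideal s P1" "is_prime_ideal s P2"
    and sub: "Lid s {\<alpha>} \<subseteq> P0" and c1: "P0 \<subset> P1" and c2: "P1 \<subset> P2"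
  shows False
proof -
  have id: "is_ideal s P1" "is_ideal s P2" using pr by (auto simp: is_prime_ideal_def)
  have sub1: "Lid s {\<alpha>} \<subseteq> P1" and sub2: "Lid s {\<alpha>} \<subseteq> P2" using sub c1 c2 by auto
  obtain a1 where a1: "a1 \<in> P1" "a1 \<notin> P0" using c1 by blast
  have "lev \<alpha> a1 \<noteq> 0"
  proof
    assume "lev \<alpha> a1 = 0"
    moreover have "a1 \<in> polyS s" using a1 id by (auto simp: is_ideal_def)
    ultimately have "a1 \<in> Lid s {\<alpha>}" by (simp add: Lid_def)
    with sub a1 show False by blast
  qed
  then obtain q1 where q1: "q1 \<in> P1" "lev \<alpha> q1 \<noteq> 0" "\<forall>p\<in>P1. lev \<alpha> q1 dvd lev \<alpha> p"
    using min_elem[OF id(1) sub1 k a1(1)] by blast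
  obtain b where b: "b \<in> P2" "b \<notin> P1" using c2 by blast
  have bS: "b \<in> polyS s" using b id by (auto simp: is_ideal_def)
  have nd: "\<not> lev \<alpha> q1 dvd lev \<alpha> b"
  proof
    assume "lev \<alpha> q1 dvd lev \<alpha> b"
    then obtain w where w: "lev \<alpha> b = lev \<alpha> q1 * w" by (auto elim: dvdE)
    obtain pw where pw: "pw \<in> polyS s" "lev \<alpha> pw = w" using lev_surj[of k s \<alpha>, OF k] by blast
    have "q1 * pw \<in> P1" by (rule ideal_mult_right[OF id(1) q1(1) pw(1)])
    then have "b \<in> P1" using lift_eq[OF id(1) sub1 bS] w pw by (simp add: lev_mult)
    with b show False by simp
  qed
  have "q1 \<in> P2" using q1 c2 by blast
  then obtain q2 where q2: "q2 \<in> P2" "lev \<alpha> q2 \<noteq> 0" "\<forall>p\<in>P2. lev \<alpha> q2 dvd lev \<alpha> p"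
    using min_elem[OF id(2) sub2 k _ q1(2)] by blast
  obtain h where h: "lev \<alpha> q1 = lev \<alpha> q2 * h" using q2(3) \<open>q1 \<in> P2\<close> by (auto elim: dvdE)
  obtain ph where ph: "ph \<in> polyS s" "lev \<alpha> ph = h" using lev_surj[of k s \<alpha>, OF k] by blast
  have q2S: "q2 \<in> polyS s" using q2 id by (auto simp: is_ideal_def)
  have "q2 * ph \<in> P1" using lift_eq[OF id(1) sub1 _ q1(1)] q2S ph h by (simp add: lev_mult polyS_mult)
  then have "q2 \<in> P1 \<or> ph \<in> P1" using pr(2) q2S ph unfolding is_prime_ideal_def by blast
  then show False
  proof
    assume "q2 \<in> P1"
    then have "lev \<alpha> q1 dvd lev \<alpha> q2" using q1 by blast
    moreover have "lev \<alpha> q2 dvd lev \<alpha> b" using q2 b by blast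
    ultimately show False using nd dvd_trans by blast
  next
    assume "ph \<in> P1"
    then obtain z where z: "h = lev \<alpha> q1 * z" using q1 ph by (auto elim: dvdE)
    have "lev \<alpha> q1 * 1 = lev \<alpha> q1 * (lev \<alpha> q2 * z)" using h z by (simp add: algebra_simps)
    then have "lev \<alpha> q2 * z = 1" using q1(2) by (metis mult_left_cancel)
    obtain pz where pz: "pz \<in> polyS s" "lev \<alpha> pz = z" using lev_surj[of k s \<alpha>, OF k] by blast
    have "q2 * pz \<in> P2" by (rule ideal_mult_right[OF id(2) q2(1) pz(1)])
    then have "1 \<in> P2" using lift_eq[OF id(2) sub2 polyS_1] pz \<open>lev \<alpha> q2 * z = 1\<close> by (simp add: lev_mult)
    with prime_one_notin[OF pr(3)] show False by simp
  qed
qed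




lemma Lid_prime:
  fixes \<alpha> :: "nat \<Rightarrow> 'a::field"
  shows "is_prime_ideal s (Lid s {\<alpha>})"
  unfolding is_prime_ideal_def
proof (intro conjI)
  show "is_ideal s (Lid s {\<alpha>})" by (rule Lid_ideal)
  show "Lid s {\<alpha>} \<noteq> polyS s"
  proof
    assume "Lid s {\<alpha>} = polyS s"
    then have "(1::'a mpoly) \<in> Lid s {\<alpha>}" by simp
    then show False by (simp add: Lid_def)
  qed
  show "\<forall>a\<in>polyS s. \<forall>b\<in>polyS s. a * b \<in> Lid s {\<alpha>} \<longrightarrow> a \<in> Lid s {\<alpha>} \<or> b \<in> Lid s {\<alpha>}"
    by (simp add: Lid_def lev_mult)
qed

lemma Zid0_prime:
  shows "is_prime_ideal s (Zid s {\<lambda>_. 0::'a::field})"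
  unfolding is_prime_ideal_def
proof (intro conjI)
  show "is_ideal s (Zid s {\<lambda>_. 0::'a})" by (rule Zid_ideal)
  show "Zid s {\<lambda>_. 0::'a} \<noteq> polyS s"
  proof
    assume "Zid s {\<lambda>_. 0::'a} = polyS s"
    then have "(1::'a mpoly) \<in> Zid s {\<lambda>_. 0}" by simp
    then show False by (simp add: Zid_def)
  qed
  show "\<forall>a\<in>polyS s. \<forall>b\<in>polyS s. a * b \<in> Zid s {\<lambda>_. 0::'a} \<longrightarrow> a \<in> Zid s {\<lambda>_. 0} \<or> b \<in> Zid s {\<lambda>_. 0}"
    by (simp add: Zid_def eval_mult)
qed

lemma Lid_sub_Zid0:
  fixes \<alpha> :: "nat \<Rightarrow> 'a::field"
  assumes k: "k < s" "\<alpha> k \<noteq> 0"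
  shows "Lid s {\<alpha>} \<subset> Zid s {\<lambda>_. 0}"
proof
  show "Lid s {\<alpha>} \<subseteq> Zid s {\<lambda>_. 0}"
    using eval_at_0[of _ \<alpha>] by (auto simp: Lid_def Zid_def)
  have "var k \<in> Zid s {\<lambda>_. 0::'a}" using k by (simp add: Zid_def polyS_var)
  moreover have "var k \<notin> Lid s {\<alpha>}" using k by (simp add: Lid_def)
  ultimately show "Lid s {\<alpha>} \<noteq> Zid s {\<lambda>_. 0}" by blast
qed

lemma some_point_ideal:
  fixes X :: "(nat \<Rightarrow> 'a::field) set"
  assumes X: "finite X" and P: "is_prime_ideal s P0" and I: "vanishing_ideal s X \<subseteq> P0"
  shows "\<exists>\<alpha>\<in>X. Lid s {\<alpha>} \<subseteq> P0"
proof (rule ccontr)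
  assume "\<not> (\<exists>\<alpha>\<in>X. Lid s {\<alpha>} \<subseteq> P0)"
  then have "\<forall>\<alpha>\<in>X. \<exists>g. g \<in> Lid s {\<alpha>} \<and> g \<notin> P0" by blast
  then obtain g where g: "\<And>\<alpha>. \<alpha> \<in> X \<Longrightarrow> g \<alpha> \<in> Lid s {\<alpha>} \<and> g \<alpha> \<notin> P0" by metis
  have "prod g X \<notin> P0"
    by (rule prime_prod_notin[OF P]) (use g in \<open>auto simp: Lid_def\<close>)
  moreover have "prod g X \<in> Lid s X"
  proof -
    have "prod g X \<in> polyS s" using g by (intro polyS_prod) (auto simp: Lid_def)
    moreover have "lev \<beta> (prod g X) = 0" if b: "\<beta> \<in> X" for \<beta>
    proof -
      have "(\<Prod>\<alpha>\<in>X. lev \<beta> (g \<alpha>)) = 0"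
        using X b g[OF b] by (intro prod_zero) (auto simp: Lid_def)
      then show ?thesis by (simp add: lev_prod)
    qed
    ultimately show ?thesis by (simp add: Lid_def)
  qed
  ultimately show False using I by (simp add: I_eq_Lid subset_iff)
qed

lemma krull_one:
  fixes X :: "(nat \<Rightarrow> 'a::field) set"
  assumes X: "finite X" and P: "proj_point_set s X"
    and f: "f \<in> polyS s" "homog_of_deg df f" and Y: "zero_set X f \<noteq> {}"
  shows "krull_dim_quot s (ideal_gen s (insert f (vanishing_ideal s X))) = 1"
proof -
  let ?J = "ideal_gen s (insert f (vanishing_ideal s X))"
  let ?K = "{k. \<exists>P :: nat \<Rightarrow> 'a mpoly set.
      (\<forall>i\<le>k. is_prime_ideal s (P i)) \<and> ?J \<subseteq> P 0 \<and> (\<forall>i<k. P i \<subset> P (Suc i))}"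
  have IJ: "vanishing_ideal s X \<subseteq> ?J" using ideal_gen_sup by blast
  have pt: "\<exists>k<s. \<alpha> k \<noteq> 0" if "\<alpha> \<in> X" for \<alpha> using P that unfolding proj_point_set_def by blast
  have "1 \<in> ?K"
  proof -
    from Y obtain \<alpha> where a: "\<alpha> \<in> X" "eval f \<alpha> = 0" by (auto simp: zero_set_def)
    from pt[OF a(1)] obtain k where k: "k < s" "\<alpha> k \<noteq> 0" by blast
    define Q where "Q i = (if i = 0 then Lid s {\<alpha>} else Zid s {\<lambda>_. 0::'a})" for i :: nat
    have "\<forall>i\<le>1. is_prime_ideal s (Q i)" by (auto simp: Q_def Lid_prime Zid0_prime)
    moreover have "?J \<subseteq> Q 0"
    proof -
      have "insert f (vanishing_ideal s X) \<subseteq> Lid s {\<alpha>}"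
      proof
        fix p assume "p \<in> insert f (vanishing_ideal s X)"
        then show "p \<in> Lid s {\<alpha>}"
        proof
          assume "p = f" then show ?thesis using f a lev_homog[OF f(2), of \<alpha>] by (simp add: Lid_def)
        next
          assume "p \<in> vanishing_ideal s X" then show ?thesis using a by (simp add: I_eq_Lid Lid_def)
        qed
      qed
      then show ?thesis unfolding Q_def by (simp add: ideal_gen_least[OF Lid_ideal])
    qed
    moreover have "\<forall>i<1. Q i \<subset> Q (Suc i)" using Lid_sub_Zid0[of k s \<alpha>, OF k] by (simp add: Q_def)
    ultimately show ?thesis by blast
  qed
  moreover have "k \<le> 1" if "k \<in> ?K" for k
  proof (rule ccontr)
    assume "\<not> k \<le> 1"
    from that obtain Q :: "nat \<Rightarrow> 'a mpoly set" where Q: "\<forall>i\<le>k. is_prime_ideal s (Q i)" "?J \<subseteq> Q 0"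
      "\<forall>i<k. Q i \<subset> Q (Suc i)" by blast
    have pr: "is_prime_ideal s (Q 0)" "is_prime_ideal s (Q 1)" "is_prime_ideal s (Q 2)"
      using Q(1) \<open>\<not> k \<le> 1\<close> by auto
    have c: "Q 0 \<subset> Q 1" "Q 1 \<subset> Q 2" using Q(3) \<open>\<not> k \<le> 1\<close>
      by (metis One_nat_def less_one not_le_imp_less order_less_trans zero_less_Suc,
          metis Suc_1 not_le_imp_less One_nat_def)
    obtain \<alpha> where a: "\<alpha> \<in> X" "Lid s {\<alpha>} \<subseteq> Q 0"
      using some_point_ideal[OF X pr(1)] IJ Q(2) by blast
    from pt[OF a(1)] obtain k' where k': "k' < s" "\<alpha> k' \<noteq> 0" by blast
    show False by (rule no_chain2[of k' s \<alpha>, OF k' pr a(2) c])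
  qed
  ultimately have "Sup ?K = 1" by (intro cSup_eq_maximum) auto
  then show ?thesis unfolding krull_dim_quot_def .
qed

theorem lemma3p2:
  fixes s :: nat and X :: "(nat \<Rightarrow> 'a::field) set" and f :: "'a mpoly"
  assumes "finite X" and "proj_point_set s X"
    and "f \<in> polyS s" and "f \<noteq> 0" and "homogeneous f"
  shows "real (card (zero_set X f)) =
    (if colon s (vanishing_ideal s X) f \<noteq> vanishing_ideal s X
     then degree_quot s (ideal_gen s (insert f (vanishing_ideal s X)))
     else 0)"
proof -
  note X = assms(1) and P = assms(2) and fS = assms(3)
  from assms(5) obtain df where fh: "homog_of_deg df f" unfolding homogeneous_def by blast
  let ?Y = "zero_set X f"
  let ?J = "ideal_gen s (insert f (vanishing_ideal s X))"
  have YX: "?Y \<subseteq> X" by (auto simp: zero_set_def)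
  have Yfin: "finite ?Y" using X YX finite_subset by blast
  show ?thesis
  proof (cases "colon s (vanishing_ideal s X) f \<noteq> vanishing_ideal s X")
    case False
    then have "?Y = {}" using colon_iff[OF X P fS fh] by blast
    with False show ?thesis by simp
  next
    case True
    then have Yne: "?Y \<noteq> {}" using colon_iff[OF X P fS fh] by blast
    have H: "hilbert_fun s ?J d = card ?Y" if d: "df + card X \<le> d" for d
    proof -
      have "card ?Y \<le> card X" using card_mono[OF X YX] .
      then have "card ?Y - 1 \<le> d" using d by simp
      then show ?thesis unfolding hilbert_fun_def J_deg[OF X P fS fh d]
        by (rule quot_dim_Wd[OF P Yfin YX])
    qed
    have "(\<lambda>d. real (hilbert_fun s ?J d) / real d ^ (1 - 1)) \<longlonglongrightarrow> real (card ?Y)"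
    proof (rule tendsto_eventually)
      show "\<forall>\<^sub>F d in sequentially. real (hilbert_fun s ?J d) / real d ^ (1 - 1) = real (card ?Y)"
        using H by (intro eventually_sequentiallyI[of "df + card X"]) simp
    qed
    then have "lim (\<lambda>d. real (hilbert_fun s ?J d) / real d ^ (1 - 1)) = real (card ?Y)"
      by (rule limI)
    then have "degree_quot s ?J = real (card ?Y)"
      unfolding degree_quot_def krull_one[OF X P fS fh Yne] by simp
    with True show ?thesis by simp
  qed
qed


end
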